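(* If $U$ is a $5$-unitrade with $|U|=16$, then there exists an element that belongs to exactly $5$ or exactly $8$ blocks of $U$.
   Context: A $k$-unitrade on a finite set $V$ is a set $U$ of $k$-element subsets (blocks) of $V$ such that every $(k-1)$-element subset of $V$ is contained in an even number of blocks of $U$. *)

theory Defs
  imports Main
begin

definition unitrade :: "nat \<Rightarrow> 'a set \<Rightarrow> 'a set set \<Rightarrow> bool" where
  "unitrade k V U \<longleftrightarrow> finite V \<and> (\<forall>B\<in>U. B \<subseteq> V \<and> card B = k) \<and>
     (\<forall>T. T \<subseteq> V \<and> card T = k - 1 \<longrightarrow> even (card {B\<in>U. T \<subseteq> B}))"

end

theory Submission
  imports Defs
begin

lemma unitrade_finite_U:
  assumes "unitrade k V U" shows "finite U"
proof -
  have "U \<subseteq> Pow V" using assms unfolding unitrade_def by auto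
  moreover have "finite V" using assms unfolding unitrade_def by auto
  ultimately show ?thesis by (meson finite_Pow_iff finite_subset)
qed

definition link :: "'a \<Rightarrow> 'a set set \<Rightarrow> 'a set set" where
  "link x U = (\<lambda>B. B - {x}) ` {B\<in>U. x \<in> B}"

lemma card_link:
  "card (link x U) = card {B\<in>U. x \<in> B}"
  unfolding link_def
proof (rule card_image)
  show "inj_on (\<lambda>B. B - {x}) {B \<in> U. x \<in> B}"
    by (rule inj_onI) (metis (no_types, lifting) insert_Diff mem_Collect_eq)
qed

lemma link_unitrade:
  assumes u: "unitrade (Suc k) V U" and k: "k \<ge> 1" and x: "x \<in> V"
  shows "unitrade k (V - {x}) (link x U)"
proof -
  have fV: "finite V" and bl: "\<forall>B\<in>U. B \<subseteq> V \<and> card B = Suc k"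
    and ev: "\<forall>T. T \<subseteq> V \<and> card T = k \<longrightarrow> even (card {B\<in>U. T \<subseteq> B})"
    using u unfolding unitrade_def by auto
  have fU: "finite U" using unitrade_finite_U[OF u] .
  have "\<forall>C\<in>link x U. C \<subseteq> V - {x} \<and> card C = k"
  proof
    fix C assume "C \<in> link x U"
    then obtain B where B: "B \<in> U" "x \<in> B" "C = B - {x}" unfolding link_def by auto
    have "finite B" using bl B fV finite_subset by blast
    then show "C \<subseteq> V - {x} \<and> card C = k" using bl B by auto
  qed
  moreover have "even (card {C\<in>link x U. T \<subseteq> C})" if T: "T \<subseteq> V - {x}" "card T = k - 1" for T
  proof -
    have fT: "finite T" using T fV finite_subset by blast
    have xT: "x \<notin> T" using T by auto
    have cT: "card (insert x T) = k" using fT xT T k by simp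
    have sub: "insert x T \<subseteq> V" using T x by auto
    have "insert x T \<subseteq> V \<and> card (insert x T) = k \<longrightarrow> even (card {B\<in>U. insert x T \<subseteq> B})"
      using ev by blast
    then have e: "even (card {B\<in>U. insert x T \<subseteq> B})" using sub cT by blast
    have "{C\<in>link x U. T \<subseteq> C} = (\<lambda>B. B - {x}) ` {B\<in>U. insert x T \<subseteq> B}"
      unfolding link_def using xT by auto
    moreover have "inj_on (\<lambda>B. B - {x}) {B\<in>U. insert x T \<subseteq> B}"
      by (rule inj_onI) (metis (no_types, lifting) insert_Diff insert_subset mem_Collect_eq)
    ultimately have "card {C\<in>link x U. T \<subseteq> C} = card {B\<in>U. insert x T \<subseteq> B}"
      by (simp add: card_image)
    then show ?thesis using e by simp
  qed
  ultimately show ?thesis unfolding unitrade_def using fV by auto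
qed

lemma unitrade_lb:
  assumes "unitrade k V U" "k \<ge> 1" "U \<noteq> {}"
  shows "card U \<ge> k + 1"
  using assms
proof (induction k arbitrary: V U rule: less_induct)
  case (less k)
  have fV: "finite V" and bl: "\<forall>B\<in>U. B \<subseteq> V \<and> card B = k"
    and ev: "\<forall>T. T \<subseteq> V \<and> card T = k - 1 \<longrightarrow> even (card {B\<in>U. T \<subseteq> B})"
    using less.prems unfolding unitrade_def by auto
  have fU: "finite U" using unitrade_finite_U[OF less.prems(1)] .
  show ?case
  proof (cases "k = 1")
    case True
    have "even (card {B\<in>U. {} \<subseteq> B})" using ev True by auto
    then have "even (card U)" by simp
    moreover have "card U \<noteq> 0" using fU less.prems by simp
    ultimately show ?thesis using True by presburger
  next
    case False
    obtain j where kj: "k = Suc j" using less.prems(2) by (cases k) auto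
    have j: "j \<ge> 1" using kj False by simp
    obtain B0 where B0: "B0 \<in> U" using less.prems(3) by auto
    define S where "S = \<Union>U"
    have SV: "S \<subseteq> V" using bl S_def by auto
    have fS: "finite S" using SV fV finite_subset by blast
    have deg: "card {B\<in>U. y \<in> B} \<ge> k" if y: "y \<in> S" for y
    proof -
      have yV: "y \<in> V" using y SV by auto
      have lu: "unitrade j (V - {y}) (link y U)" using link_unitrade[of j V U y] less.prems(1) kj j yV by simp
      have "link y U \<noteq> {}" using y S_def unfolding link_def by auto
      then have "card (link y U) \<ge> j + 1" using less.IH[of j "V - {y}" "link y U"] kj j lu by simp
      then show ?thesis using card_link[of y U] kj by simp
    qed
    have cB: "\<forall>B\<in>U. card {y\<in>S. y \<in> B} = k"
    proof
      fix B assume "B \<in> U"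
      then have "{y\<in>S. y \<in> B} = B" using S_def by auto
      then show "card {y\<in>S. y \<in> B} = k" using bl \<open>B \<in> U\<close> by simp
    qed
    have sm: "(\<Sum>y\<in>S. card {B\<in>U. y \<in> B}) = k * card U"
      by (rule sum_multicount[OF fS fU cB])
    have "(\<Sum>y\<in>S. k) \<le> (\<Sum>y\<in>S. card {B\<in>U. y \<in> B})"
      by (rule sum_mono) (use deg in auto)
    then have "k * card S \<le> k * card U" using sm by (simp add: mult.commute)
    then have SU: "card S \<le> card U" by (metis mult_le_cancel1 kj zero_less_Suc)
    have B0S: "B0 \<subseteq> S" using B0 S_def by auto
    have "S \<noteq> B0"
    proof
      assume SB: "S = B0"
      have "U = {B0}"
      proof -
        have "B = B0" if "B \<in> U" for B
        proof -
          have "B \<subseteq> B0" using that SB S_def by auto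
          moreover have "card B = card B0" using bl that B0 by auto
          moreover have "finite B0" using fS SB by simp
          ultimately show ?thesis using card_subset_eq by blast
        qed
        then show ?thesis using B0 by blast
      qed
      have "card B0 = k" using bl B0 by auto
      then have "B0 \<noteq> {}" using kj by auto
      then obtain z where z: "z \<in> B0" by blast
      have fB0: "finite B0" using fS SB by simp
      have "B0 - {z} \<subseteq> V" using bl B0 by auto
      moreover have "card (B0 - {z}) = k - 1" using z fB0 \<open>card B0 = k\<close> by simp
      ultimately have "even (card {B\<in>U. B0 - {z} \<subseteq> B})" using ev by blast
      moreover have "{B\<in>U. B0 - {z} \<subseteq> B} = {B0}" using \<open>U = {B0}\<close> by auto
      ultimately show False by simp
    qed
    then have "card B0 < card S" using B0S fS psubset_card_mono by blast
    then show ?thesis using bl B0 SU by auto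
  qed
qed


lemma card_filter_sum: "finite A \<Longrightarrow> card {z\<in>A. P z} = (\<Sum>z\<in>A. of_bool (P z))"
  by (simp add: sum.If_cases Int_def)

lemma face_eq:
  assumes "finite Q" "p \<subseteq> Q" "card p + 1 = card Q"
  shows "\<exists>z\<in>Q. p = Q - {z}"
proof -
  have fp: "finite p" using assms finite_subset by blast
  have "card (Q - p) = 1" using assms fp by (simp add: card_Diff_subset)
  then obtain z where z: "Q - p = {z}" by (auto simp: card_1_singleton_iff)
  then have "z \<in> Q" by auto
  moreover have "p = Q - {z}" using z assms(2) by auto
  ultimately show ?thesis by blast
qed

lemma faces_card:
  assumes fQ: "finite Q" and cG: "\<forall>p\<in>G. p \<subseteq> Q \<longrightarrow> card p + 1 = card Q"
  shows "card {p\<in>G. p \<subseteq> Q} = (\<Sum>z\<in>Q. of_bool (Q - {z} \<in> G))"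
proof -
  have "{p\<in>G. p \<subseteq> Q} = (\<lambda>z. Q - {z}) ` {z\<in>Q. Q - {z} \<in> G}"
  proof
    show "{p\<in>G. p \<subseteq> Q} \<subseteq> (\<lambda>z. Q - {z}) ` {z\<in>Q. Q - {z} \<in> G}"
    proof
      fix p assume p: "p \<in> {p\<in>G. p \<subseteq> Q}"
      then have "card p + 1 = card Q" using cG by auto
      then obtain z where "z \<in> Q" "p = Q - {z}" using face_eq[OF fQ] p by blast
      then show "p \<in> (\<lambda>z. Q - {z}) ` {z\<in>Q. Q - {z} \<in> G}" using p by auto
    qed
  qed auto
  moreover have "inj_on (\<lambda>z. Q - {z}) {z\<in>Q. Q - {z} \<in> G}"
    by (rule inj_onI) auto
  ultimately have "card {p\<in>G. p \<subseteq> Q} = card {z\<in>Q. Q - {z} \<in> G}"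
    by (simp add: card_image)
  also have "\<dots> = (\<Sum>z\<in>Q. of_bool (Q - {z} \<in> G))" by (rule card_filter_sum[OF fQ])
  finally show ?thesis .
qed

lemma sum3: "distinct [a,b,c] \<Longrightarrow> (\<Sum>z\<in>{a,b,c}. f z) = f a + f b + (f c::nat)"
  by (simp add: add.assoc)

lemma sum4: "distinct [a,b,c,d] \<Longrightarrow> (\<Sum>z\<in>{a,b,c,d}. f z) = f a + f b + f c + (f d::nat)"
  by (simp add: add.assoc)

lemma diff3: assumes "distinct [a,b,c]"
  shows "{a,b,c} - {a} = {b,c}" "{a,b,c} - {b} = {a,c}" "{a,b,c} - {c} = {a,b}"
  using assms by auto

lemma diff4: assumes "distinct [a,b,c,d]"
  shows "{a,b,c,d} - {a} = {b,c,d}" "{a,b,c,d} - {b} = {a,c,d}" "{a,b,c,d} - {c} = {a,b,d}" "{a,b,c,d} - {d} = {a,b,c}"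
  using assms by auto

definition tg :: "'a set \<Rightarrow> 'a set set \<Rightarrow> bool" where
  "tg W F \<longleftrightarrow> finite W \<and> (\<forall>t\<in>F. t \<subseteq> W \<and> card t = 3) \<and>
     (\<forall>Q. Q \<subseteq> W \<and> card Q = 4 \<longrightarrow> even (card {t\<in>F. t \<subseteq> Q}))"

lemma tg1:
  assumes tg: "tg W F" and W: "x\<in>W" "a\<in>W" "b\<in>W" "c\<in>W" and d: "distinct [x,a,b,c]"
  shows "({a,b,c} \<in> F) = odd (of_bool ({x,a,b}\<in>F) + of_bool ({x,a,c}\<in>F) + of_bool ({x,b,c}\<in>F) :: nat)"
proof -
  let ?Q = "{x,a,b,c}"
  have cQ: "card ?Q = 4" using d by simp
  have sQ: "?Q \<subseteq> W" using W by auto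
  have e: "even (card {t\<in>F. t \<subseteq> ?Q})" using tg cQ sQ unfolding tg_def by blast
  have "card {t\<in>F. t \<subseteq> ?Q} = (\<Sum>z\<in>?Q. of_bool (?Q - {z} \<in> F))"
    by (rule faces_card) (use tg cQ in \<open>auto simp: tg_def\<close>)
  also have "(\<Sum>z\<in>?Q. of_bool (?Q - {z} \<in> F)::nat) = of_bool ({a,b,c}\<in>F) + of_bool ({x,b,c}\<in>F) + of_bool ({x,a,c}\<in>F) + of_bool ({x,a,b}\<in>F)"
    using d by (simp only: sum4 diff4)
  finally show ?thesis using e by (auto simp: of_bool_def split: if_splits)
qed

lemma cut_card:
  assumes fW: "finite W" and G: "\<forall>p\<in>G. p \<subseteq> W \<and> card p = 2"
    and ev: "\<forall>Q. Q \<subseteq> W \<and> card Q = 3 \<longrightarrow> even (card {p\<in>G. p \<subseteq> Q})"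
  shows "\<exists>a. a \<le> card W \<and> card G = a * (card W - a)"
proof (cases "W = {}")
  case True
  have "G = {}"
  proof (rule ccontr)
    assume "G \<noteq> {}"
    then obtain p where "p \<in> G" by auto
    then show False using G True by fastforce
  qed
  then show ?thesis by auto
next
  case False
  then obtain v where v: "v \<in> W" by auto
  define A where "A = {w\<in>W. w = v \<or> {v,w} \<notin> G}"
  have par: "({a,b} \<in> G) = (({v,a} \<in> G) \<noteq> ({v,b} \<in> G))" if ab: "a\<in>W" "b\<in>W" "distinct [v,a,b]" for a b
  proof -
    let ?Q = "{v,a,b}"
    have cQ: "card ?Q = 3" using ab by simp
    have sQ: "?Q \<subseteq> W" using ab v by auto
    have e: "even (card {p\<in>G. p \<subseteq> ?Q})" using ev cQ sQ by blast
    have "card {p\<in>G. p \<subseteq> ?Q} = (\<Sum>z\<in>?Q. of_bool (?Q - {z} \<in> G))"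
      by (rule faces_card) (use G cQ in auto)
    also have "(\<Sum>z\<in>?Q. of_bool (?Q - {z} \<in> G)::nat) = of_bool ({a,b}\<in>G) + of_bool ({v,b}\<in>G) + of_bool ({v,a}\<in>G)"
      using ab(3) by (simp only: sum3 diff3 add.commute)
    finally show ?thesis using e by (auto simp: of_bool_def split: if_splits)
  qed
  have key: "({a,b} \<in> G) = (a \<in> A \<longleftrightarrow> b \<notin> A)" if ab: "a\<in>W" "b\<in>W" "a \<noteq> b" for a b
  proof (cases "a = v")
    case True
    then show ?thesis using ab unfolding A_def by auto
  next
    case av: False
    show ?thesis
    proof (cases "b = v")
      case True
      then show ?thesis using ab av unfolding A_def by (auto simp: insert_commute)
    next
      case False
      then show ?thesis using par[of a b] ab av unfolding A_def by auto
    qed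
  qed
  have GA: "G = (\<lambda>(a,b). {a,b}) ` (A \<times> (W - A))"
  proof
    show "G \<subseteq> (\<lambda>(a,b). {a,b}) ` (A \<times> (W - A))"
    proof
      fix p assume p: "p \<in> G"
      then obtain a b where ab: "p = {a,b}" "a \<noteq> b" using G card_2_iff by metis
      have abW: "a \<in> W" "b \<in> W" using ab p G by auto
      have "a \<in> A \<longleftrightarrow> b \<notin> A" using key[OF abW ab(2)] p ab by simp
      moreover have "A \<subseteq> W" unfolding A_def by auto
      ultimately show "p \<in> (\<lambda>(a,b). {a,b}) ` (A \<times> (W - A))"
        using ab abW by (cases "a \<in> A") (auto simp: insert_commute image_iff)
    qed
    show "(\<lambda>(a,b). {a,b}) ` (A \<times> (W - A)) \<subseteq> G"
    proof
      fix p assume "p \<in> (\<lambda>(a,b). {a,b}) ` (A \<times> (W - A))"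
      then obtain a b where ab: "a \<in> A" "b \<in> W" "b \<notin> A" "p = {a,b}" by auto
      have "a \<in> W" using ab unfolding A_def by auto
      moreover have "a \<noteq> b" using ab by auto
      ultimately show "p \<in> G" using key[of a b] ab by auto
    qed
  qed
  have inj: "inj_on (\<lambda>(a,b). {a,b}) (A \<times> (W - A))"
  proof (rule inj_onI, clarify)
    fix a b a' b' assume h: "a \<in> A" "b \<in> W" "b \<notin> A" "a' \<in> A" "b' \<in> W" "b' \<notin> A" "{a,b} = {a',b'}"
    then show "a = a' \<and> b = b'" by (metis doubleton_eq_iff)
  qed
  have AW: "A \<subseteq> W" unfolding A_def by auto
  have "card G = card (A \<times> (W - A))" using GA inj by (simp add: card_image)
  also have "\<dots> = card A * (card W - card A)"
    using card_Diff_subset[OF finite_subset[OF AW fW] AW] by (simp add: card_cartesian_product)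
  finally show ?thesis using AW fW card_mono by blast
qed


lemma card3_distinct: "card {a,b,c} = 3 \<Longrightarrow> distinct [a,b,c]"
  by (cases "a=b"; cases "a=c"; cases "b=c"; simp add: card_insert_if)

lemma tg_finF: "tg W F \<Longrightarrow> finite F"
proof -
  assume "tg W F"
  then have "F \<subseteq> Pow W" "finite W" unfolding tg_def by auto
  then show "finite F" by (meson finite_Pow_iff finite_subset)
qed

lemma tg_tri:
  assumes "tg W F" "{a,b,c} \<in> F" shows "distinct [a,b,c] \<and> a \<in> W \<and> b \<in> W \<and> c \<in> W"
proof -
  have "{a,b,c} \<subseteq> W" "card {a,b,c} = 3" using assms unfolding tg_def by auto
  then show ?thesis using card3_distinct[of a b c] by simp
qed

definition nb :: "'a set \<Rightarrow> 'a set set \<Rightarrow> 'a \<Rightarrow> 'a \<Rightarrow> 'a set" where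
  "nb W F x u = {w\<in>W. {x,u,w} \<in> F}"

lemma tg_deg:
  assumes tg: "tg W F" and x: "x\<in>W" and u: "u\<in>W" "u\<noteq>x"
  shows "card (nb W F x u) * (1 + card (W - {x,u} - nb W F x u))
           \<le> card {t\<in>F. u\<in>t} + card {t\<in>F. x\<in>t \<and> u\<notin>t}"
proof -
  define N where "N = nb W F x u"
  define R where "R = W - {x,u} - N"
  have fW: "finite W" using tg unfolding tg_def by auto
  have fF: "finite F" using tg_finF[OF tg] .
  have NW: "N \<subseteq> W - {x,u}"
  proof
    fix w assume "w \<in> N"
    then have "{x,u,w} \<in> F" "w \<in> W" unfolding N_def nb_def by auto
    then show "w \<in> W - {x,u}" using tg_tri[OF tg, of x u w] by auto
  qed
  have fN: "finite N" using NW fW finite_subset by blast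
  have fR: "finite R" unfolding R_def using fW by simp
  have NR: "N \<inter> R = {}" unfolding R_def by auto
  have RW: "R \<subseteq> W - {x,u}" unfolding R_def by auto
  define A1 where "A1 = (\<lambda>w. {x,u,w}) ` N"
  define P2 where "P2 = {(a,b)\<in>N\<times>R. {x,a,b} \<notin> F}"
  define P3 where "P3 = {(a,b)\<in>N\<times>R. {x,a,b} \<in> F}"
  define A2 where "A2 = (\<lambda>(a,b). {u,a,b}) ` P2"
  define A3 where "A3 = (\<lambda>(a,b). {x,a,b}) ` P3"
  have cA1: "card A1 = card N" unfolding A1_def
  proof (rule card_image, rule inj_onI)
    fix w w' assume "w \<in> N" "w' \<in> N" "{x,u,w} = {x,u,w'}"
    then have "w \<in> {x,u,w'}" by blast
    moreover have "w \<noteq> x" "w \<noteq> u" using \<open>w \<in> N\<close> NW by auto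
    ultimately show "w = w'" by blast
  qed
  have inj2: "inj_on (\<lambda>(a,b). {u,a,b}) (N\<times>R)"
  proof (rule inj_onI, clarify)
    fix a b a' b' assume h: "a \<in> N" "b \<in> R" "a' \<in> N" "b' \<in> R" "{u,a,b} = {u,a',b'}"
    have "a \<in> {u,a',b'}" "b \<in> {u,a',b'}" using h(5) by blast+
    moreover have "a \<noteq> u" "b \<noteq> u" "a \<noteq> b'" "b \<noteq> a'" using NW RW NR h(1-4) by auto
    ultimately show "a = a' \<and> b = b'" by blast
  qed
  have inj3: "inj_on (\<lambda>(a,b). {x,a,b}) (N\<times>R)"
  proof (rule inj_onI, clarify)
    fix a b a' b' assume h: "a \<in> N" "b \<in> R" "a' \<in> N" "b' \<in> R" "{x,a,b} = {x,a',b'}"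
    have "a \<in> {x,a',b'}" "b \<in> {x,a',b'}" using h(5) by blast+
    moreover have "a \<noteq> x" "b \<noteq> x" "a \<noteq> b'" "b \<noteq> a'" using NW RW NR h(1-4) by auto
    ultimately show "a = a' \<and> b = b'" by blast
  qed
  have cA2: "card A2 = card P2" unfolding A2_def
    by (rule card_image, rule inj_on_subset[OF inj2]) (auto simp: P2_def)
  have cA3: "card A3 = card P3" unfolding A3_def
    by (rule card_image, rule inj_on_subset[OF inj3]) (auto simp: P3_def)
  have P23: "card P2 + card P3 = card N * card R"
  proof -
    have u: "P2 \<union> P3 = N \<times> R" and i: "P2 \<inter> P3 = {}" unfolding P2_def P3_def by auto
    have s: "P2 \<subseteq> N \<times> R" "P3 \<subseteq> N \<times> R" unfolding P2_def P3_def by auto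
    have f: "finite P2" "finite P3" using s fN fR finite_subset by blast+
    have "card (N \<times> R) = card P2 + card P3" using card_Un_disjoint[OF f i] u by simp
    then show ?thesis by (simp add: card_cartesian_product)
  qed
  have A1F: "A1 \<subseteq> {t\<in>F. u\<in>t \<and> x\<in>t}" unfolding A1_def N_def nb_def by auto
  have A2F: "A2 \<subseteq> {t\<in>F. u\<in>t \<and> x\<notin>t}"
  proof
    fix t assume "t \<in> A2"
    then obtain a b where ab: "a \<in> N" "b \<in> R" "{x,a,b} \<notin> F" "t = {u,a,b}"
      unfolding A2_def P2_def by auto
    have aW: "a \<in> W" "a \<noteq> x" "a \<noteq> u" using ab NW by auto
    have bW: "b \<in> W" "b \<noteq> x" "b \<noteq> u" using ab RW by auto
    have "a \<noteq> b" using ab NR by auto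
    then have d: "distinct [x,u,a,b]" using aW bW u by auto
    have "{x,u,a} \<in> F" using ab(1) unfolding N_def nb_def by auto
    moreover have "{x,u,b} \<notin> F" using ab(2) bW unfolding R_def N_def nb_def by auto
    ultimately have "{u,a,b} \<in> F" using tg1[OF tg x u(1) aW(1) bW(1) d] ab(3) by simp
    then show "t \<in> {t\<in>F. u\<in>t \<and> x\<notin>t}" using ab aW bW u by auto
  qed
  have A3F: "A3 \<subseteq> {t\<in>F. x\<in>t \<and> u\<notin>t}"
  proof
    fix t assume "t \<in> A3"
    then obtain a b where ab: "a \<in> N" "b \<in> R" "{x,a,b} \<in> F" "t = {x,a,b}"
      unfolding A3_def P3_def by auto
    then show "t \<in> {t\<in>F. x\<in>t \<and> u\<notin>t}" using NW RW u(2) by auto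
  qed
  have fin1: "finite {t\<in>F. u\<in>t \<and> x\<in>t}" "finite {t\<in>F. u\<in>t \<and> x\<notin>t}" "finite {t\<in>F. x\<in>t \<and> u\<notin>t}"
    using fF by auto
  have "card A1 + card A2 \<le> card {t\<in>F. u\<in>t \<and> x\<in>t} + card {t\<in>F. u\<in>t \<and> x\<notin>t}"
    using card_mono[OF fin1(1) A1F] card_mono[OF fin1(2) A2F] by simp
  also have "\<dots> = card {t\<in>F. u\<in>t}"
  proof -
    have "{t\<in>F. u\<in>t} = {t\<in>F. u\<in>t \<and> x\<in>t} \<union> {t\<in>F. u\<in>t \<and> x\<notin>t}" by auto
    then show ?thesis using fin1 by (simp add: card_Un_disjoint disjoint_iff)
  qed
  finally have h1: "card A1 + card A2 \<le> card {t\<in>F. u\<in>t}" .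
  have h2: "card A3 \<le> card {t\<in>F. x\<in>t \<and> u\<notin>t}" using card_mono[OF fin1(3) A3F] .
  have "card N * (1 + card R) = card A1 + card A2 + card A3" using cA1 cA2 cA3 P23
    by (simp add: algebra_simps)
  then have "card N * (1 + card R) \<le> card {t\<in>F. u\<in>t} + card {t\<in>F. x\<in>t \<and> u\<notin>t}"
    using h1 h2 by linarith
  then show ?thesis by (simp only: N_def R_def)
qed


lemma tg_fin: "tg W F \<Longrightarrow> finite W" unfolding tg_def by auto

lemma pair_of_tri:
  assumes tg: "tg W F" and p: "p \<in> F" and x: "x \<in> p"
  obtains a b where "p = {x,a,b}" "distinct [x,a,b]" "a \<in> W" "b \<in> W"
proof -
  have c: "card p = 3" "p \<subseteq> W" using tg p unfolding tg_def by auto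
  have fp: "finite p" using c(2) tg_fin[OF tg] finite_subset by blast
  have "card (p - {x}) = 2" using c x fp by simp
  then obtain a b where ab: "p - {x} = {a,b}" "a \<noteq> b" by (auto simp: card_2_iff)
  have "p = {x,a,b}" using ab x by auto
  moreover have "distinct [x,a,b]" using ab by auto
  moreover have "a\<in>W" "b\<in>W" using ab c by auto
  ultimately show ?thesis using that by blast
qed

lemma tg_count:
  assumes tg: "tg W F" and x: "x \<in> W" and D: "D \<ge> 1"
    and deg: "\<forall>y\<in>W-{x}. card (nb W F x y) \<le> D"
  shows "card {t\<in>F. x\<in>t} * (card W - 1 - 2*D) + card {t\<in>F. x\<in>t} \<le> card F"
proof -
  define Fx where "Fx = {t\<in>F. x\<in>t}"
  define Z where "Z p = {z \<in> W - p. \<forall>y\<in>p-{x}. {x,y,z} \<notin> F}" for p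
  define I where "I p = (\<lambda>z. insert z (p - {x})) ` Z p" for p
  have fW: "finite W" using tg_fin[OF tg] .
  have fF: "finite F" using tg_finF[OF tg] .
  have fFx: "finite Fx" unfolding Fx_def using fF by simp
  have IF: "I p \<subseteq> {t\<in>F. x \<notin> t}" if p: "p \<in> Fx" for p
  proof
    fix t assume "t \<in> I p"
    then obtain z where z: "z \<in> Z p" "t = insert z (p - {x})" unfolding I_def by auto
    obtain a b where ab: "p = {x,a,b}" "distinct [x,a,b]" "a\<in>W" "b\<in>W"
      using pair_of_tri[OF tg, of p x] p unfolding Fx_def by auto
    have pmx: "p - {x} = {a,b}" using ab by auto
    have zW: "z \<in> W" "z \<notin> {x,a,b}" using z ab unfolding Z_def by auto
    have n1: "{x,a,z} \<notin> F" "{x,b,z} \<notin> F" using z pmx unfolding Z_def by auto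
    have d: "distinct [x,a,b,z]" using ab zW by auto
    have pF: "{x,a,b} \<in> F" using p ab unfolding Fx_def by simp
    have "{a,b,z} \<in> F" using tg1[OF tg x ab(3) ab(4) zW(1) d] n1 pF by simp
    moreover have "t = {a,b,z}" using z(2) pmx by auto
    ultimately show "t \<in> {t\<in>F. x\<notin>t}" using zW ab(2) by auto
  qed
  have cI: "card (I p) = card (Z p)" for p
    unfolding I_def
  proof (rule card_image, rule inj_onI)
    fix z z' assume h: "z \<in> Z p" "z' \<in> Z p" "insert z (p - {x}) = insert z' (p - {x})"
    have "z \<notin> p" "z' \<notin> p" using h(1,2) unfolding Z_def by auto
    moreover have "z \<in> insert z' (p - {x})" using h(3) by blast
    ultimately show "z = z'" by blast
  qed
  have cZ: "card W - 1 - 2*D \<le> card (Z p)" if p: "p \<in> Fx" for p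
  proof -
    obtain a b where ab: "p = {x,a,b}" "distinct [x,a,b]" "a\<in>W" "b\<in>W"
      using pair_of_tri[OF tg, of p x] p unfolding Fx_def by auto
    have pmx: "p - {x} = {a,b}" using ab by auto
    have pF: "{x,a,b} \<in> F" using p ab unfolding Fx_def by simp
    define Na where "Na = nb W F x a"
    define Nb where "Nb = nb W F x b"
    have ZE: "Z p = ((W - p) - (Na - {b})) - (Nb - {a})"
      unfolding Z_def Na_def Nb_def nb_def using pmx ab(1) by auto
    have bNa: "b \<in> Na" unfolding Na_def nb_def using pF ab by simp
    have aNb: "a \<in> Nb" unfolding Nb_def nb_def using pF ab by (simp add: insert_commute)
    have cNa: "card Na \<le> D" unfolding Na_def using deg ab by auto
    have cNb: "card Nb \<le> D" unfolding Nb_def using deg ab by auto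
    have fNa: "finite Na" "finite Nb" unfolding Na_def Nb_def nb_def using fW by auto
    have c1: "card (Na - {b}) = card Na - 1" using fNa bNa by simp
    have c2: "card (Nb - {a}) = card Nb - 1" using fNa aNb by simp
    have pW: "p \<subseteq> W" using ab x by auto
    have c3: "card (W - p) = card W - 3" using ab pW fW by (simp add: card_Diff_subset)
    have "card (W - p) - card (Na - {b}) \<le> card ((W - p) - (Na - {b}))"
      using diff_card_le_card_Diff fNa by blast
    moreover have "card ((W - p) - (Na - {b})) - card (Nb - {a}) \<le> card (((W - p) - (Na - {b})) - (Nb - {a}))"
      using diff_card_le_card_Diff fNa by blast
    ultimately have "card W - 3 - (card Na - 1) - (card Nb - 1) \<le> card (((W - p) - (Na - {b})) - (Nb - {a}))"
      using c1 c2 c3 by linarith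
    then have "card W - 3 - (card Na - 1) - (card Nb - 1) \<le> card (Z p)" using ZE by simp
    then show ?thesis using cNa cNb D by linarith
  qed
  have disj: "I p \<inter> I q = {}" if pq: "p \<in> Fx" "q \<in> Fx" "p \<noteq> q" for p q
  proof (rule ccontr)
    assume "I p \<inter> I q \<noteq> {}"
    then obtain t where t: "t \<in> I p" "t \<in> I q" by auto
    obtain z where z: "z \<in> Z p" "t = insert z (p - {x})" using t(1) unfolding I_def by auto
    obtain z' where z': "z' \<in> Z q" "t = insert z' (q - {x})" using t(2) unfolding I_def by auto
    obtain a b where ab: "p = {x,a,b}" "distinct [x,a,b]" "a\<in>W" "b\<in>W"
      using pair_of_tri[OF tg, of p x] pq unfolding Fx_def by auto
    obtain a' b' where ab': "q = {x,a',b'}" "distinct [x,a',b']" "a'\<in>W" "b'\<in>W"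
      using pair_of_tri[OF tg, of q x] pq unfolding Fx_def by auto
    have pmx: "p - {x} = {a,b}" using ab by auto
    have qmx: "q - {x} = {a',b'}" using ab' by auto
    have qF: "q \<in> F" using pq unfolding Fx_def by simp
    have zZ: "\<forall>y\<in>{a,b}. {x,y,z} \<notin> F" using z(1) pmx unfolding Z_def by auto
    have qt: "{a',b'} \<subseteq> insert z {a,b}" using z(2) z'(2) pmx qmx by auto
    have "q - {x} = p - {x}"
    proof (cases "z \<in> {a',b'}")
      case True
      then obtain y where y: "{a',b'} = {z,y}" "y \<noteq> z" using ab'(2) by auto
      then have "y \<in> {a,b}" using qt by auto
      moreover have "{x,y,z} \<in> F" using qF ab'(1) y(1) by (metis insert_commute)
      ultimately show ?thesis using zZ by blast
    next
      case False
      then have "{a',b'} \<subseteq> {a,b}" using qt by auto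
      moreover have "card {a',b'} = card {a,b}" using ab(2) ab'(2) by simp
      ultimately have "{a',b'} = {a,b}" by (simp add: card_subset_eq)
      then show ?thesis using pmx qmx by simp
    qed
    then have "p = q" using ab(1) ab'(1) pmx qmx by auto
    then show False using pq by simp
  qed
  have fI: "finite (I p)" if "p \<in> Fx" for p
    using IF[OF that] fF finite_subset by (metis (no_types, lifting) mem_Collect_eq subsetI)
  have UF: "(\<Union>p\<in>Fx. I p) \<subseteq> {t\<in>F. x\<notin>t}" using IF by blast
  have cU: "card (\<Union>p\<in>Fx. I p) = (\<Sum>p\<in>Fx. card (I p))"
    by (rule card_UN_disjoint) (use fFx fI disj in auto)
  have "(\<Sum>p\<in>Fx. card W - 1 - 2*D) \<le> (\<Sum>p\<in>Fx. card (I p))"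
    by (rule sum_mono) (use cZ cI in auto)
  then have s1: "card Fx * (card W - 1 - 2*D) \<le> card (\<Union>p\<in>Fx. I p)" using cU by simp
  have s2: "card (\<Union>p\<in>Fx. I p) \<le> card {t\<in>F. x\<notin>t}" using card_mono[OF _ UF] fF by simp
  have s3: "card F = card Fx + card {t\<in>F. x\<notin>t}"
  proof -
    have "F = Fx \<union> {t\<in>F. x\<notin>t}" unfolding Fx_def by auto
    moreover have "Fx \<inter> {t\<in>F. x\<notin>t} = {}" unfolding Fx_def by auto
    ultimately show ?thesis using fF card_Un_disjoint[of Fx "{t\<in>F. x\<notin>t}"] fFx by simp
  qed
  show ?thesis using s1 s2 s3 unfolding Fx_def by linarith
qed


lemma tg_star:
  assumes tg: "tg W F" and x: "x\<in>W" and u: "u\<in>W" "u\<noteq>x" and full: "nb W F x u = W - {x,u}"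
  shows "card F \<le> card {t\<in>F. x\<in>t} + card {t\<in>F. x\<in>t \<and> u\<notin>t} * (card W - 3)"
proof -
  define P where "P = {t\<in>F. x\<in>t \<and> u\<notin>t}"
  define J where "J p = (\<lambda>z. insert z (p - {x})) ` (W - p)" for p
  have fW: "finite W" using tg unfolding tg_def by auto
  have fF: "finite F" using tg_finF[OF tg] .
  have inN: "{x,u,w} \<in> F" if "w \<in> W" "w \<noteq> x" "w \<noteq> u" for w
  proof -
    have "w \<in> nb W F x u" using full that by auto
    then show ?thesis unfolding nb_def by simp
  qed
  have mem: "t \<in> (\<Union>p\<in>P. J p)"
    if h: "{x,b',c'} \<in> F" "u \<noteq> b'" "u \<noteq> c'" "z \<in> W" "z \<noteq> x" "z \<noteq> b'" "z \<noteq> c'" "t = {z,b',c'}"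
         "x \<noteq> b'" "x \<noteq> c'" for b' c' z t
  proof -
    have pP: "{x,b',c'} \<in> P" unfolding P_def using h u(2) by auto
    have "t = insert z ({x,b',c'} - {x})" using h by auto
    moreover have "z \<in> W - {x,b',c'}" using h by auto
    ultimately have "t \<in> J {x,b',c'}" unfolding J_def by blast
    then show ?thesis using pP by blast
  qed
  have cover: "{t\<in>F. x\<notin>t} \<subseteq> (\<Union>p\<in>P. J p)"
  proof
    fix t assume t: "t \<in> {t\<in>F. x\<notin>t}"
    have "card t = 3" "t \<subseteq> W" using t tg unfolding tg_def by auto
    then obtain a b c where abc: "t = {a,b,c}" "a\<noteq>b" "b\<noteq>c" "a\<noteq>c" by (auto simp: card_3_iff)
    have W: "a\<in>W" "b\<in>W" "c\<in>W" "a\<noteq>x" "b\<noteq>x" "c\<noteq>x" using abc t \<open>t \<subseteq> W\<close> by auto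
    have d: "distinct [x,a,b,c]" using abc W by auto
    have tF: "{a,b,c} \<in> F" using t abc by simp
    have par: "odd (of_bool ({x,a,b}\<in>F) + of_bool ({x,a,c}\<in>F) + of_bool ({x,b,c}\<in>F) :: nat)"
      using tg1[OF tg x W(1-3) d] tF by simp
    show "t \<in> (\<Union>p\<in>P. J p)"
    proof (cases "u = a")
      case True
      have "{x,a,b} \<in> F" "{x,a,c} \<in> F" using inN[of b] inN[of c] True W abc by auto
      then have "{x,b,c} \<in> F" using par by simp
      then show ?thesis using mem[of b c a t] True W abc by auto
    next
      case ua: False
      show ?thesis
      proof (cases "u = b")
        case True
        have "{x,b,a} \<in> F" "{x,b,c} \<in> F" using inN[of a] inN[of c] True W abc by auto
        then have "{x,a,b} \<in> F" "{x,b,c} \<in> F" by (auto simp: insert_commute)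
        then have "{x,a,c} \<in> F" using par by simp
        moreover have "t = {b,a,c}" using abc by auto
        ultimately show ?thesis using mem[of a c b t] True W abc by auto
      next
        case ub: False
        show ?thesis
        proof (cases "u = c")
          case True
          have "{x,c,a} \<in> F" "{x,c,b} \<in> F" using inN[of a] inN[of b] True W abc by auto
          then have "{x,a,c} \<in> F" "{x,b,c} \<in> F" by (auto simp: insert_commute)
          then have "{x,a,b} \<in> F" using par by simp
          moreover have "t = {c,a,b}" using abc by auto
          ultimately show ?thesis using mem[of a b c t] True W abc by auto
        next
          case uc: False
          have "{x,a,b} \<in> F \<or> {x,a,c} \<in> F \<or> {x,b,c} \<in> F" using par by auto
          moreover have "t = {c,a,b}" "t = {b,a,c}" using abc by auto
          ultimately show ?thesis using mem[of a b c t] mem[of a c b t] mem[of b c a t] ua ub uc W abc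
            by blast
        qed
      qed
    qed
  qed
  have fP: "finite P" unfolding P_def using fF by simp
  have cJ: "card (J p) \<le> card W - 3" if "p \<in> P" for p
  proof -
    have "p \<subseteq> W" "card p = 3" using that tg unfolding P_def tg_def by auto
    then have "card (W - p) = card W - 3" using fW by (simp add: card_Diff_subset finite_subset)
    moreover have "card (J p) \<le> card (W - p)" unfolding J_def by (rule card_image_le) (use fW in simp)
    ultimately show ?thesis by simp
  qed
  have "card {t\<in>F. x\<notin>t} \<le> card (\<Union>p\<in>P. J p)"
    by (rule card_mono[OF _ cover]) (use fP fW in \<open>simp add: J_def\<close>)
  also have "\<dots> \<le> (\<Sum>p\<in>P. card (J p))" by (rule card_UN_le[OF fP])
  also have "\<dots> \<le> (\<Sum>p\<in>P. card W - 3)" by (rule sum_mono) (use cJ in auto)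
  also have "\<dots> = card P * (card W - 3)" by simp
  finally have h: "card {t\<in>F. x\<notin>t} \<le> card P * (card W - 3)" .
  have "card F = card {t\<in>F. x\<in>t} + card {t\<in>F. x\<notin>t}"
  proof -
    have "F = {t\<in>F. x\<in>t} \<union> {t\<in>F. x\<notin>t}" by auto
    moreover have "{t\<in>F. x\<in>t} \<inter> {t\<in>F. x\<notin>t} = {}" by auto
    ultimately show ?thesis using fF card_Un_disjoint[of "{t\<in>F. x\<in>t}" "{t\<in>F. x\<notin>t}"] by simp
  qed
  then show ?thesis using h unfolding P_def by linarith
qed


lemma compl:
  assumes u: "unitrade k V U" and k: "k \<ge> 1" and SV: "S \<subseteq> V" and US: "\<forall>B\<in>U. B \<subseteq> S"
    and kS: "k \<le> card S"
  defines "F \<equiv> (\<lambda>B. S - B) ` U"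
  shows "card F = card U"
    and "\<forall>t\<in>F. t \<subseteq> S \<and> card t = card S - k"
    and "\<forall>Q. Q \<subseteq> S \<and> card Q = card S - k + 1 \<longrightarrow> even (card {t\<in>F. t \<subseteq> Q})"
    and "\<forall>y\<in>S. card {t\<in>F. y \<in> t} + card {B\<in>U. y \<in> B} = card U"
proof -
  have fV: "finite V" and bl: "\<forall>B\<in>U. B \<subseteq> V \<and> card B = k"
    and ev: "\<forall>T. T \<subseteq> V \<and> card T = k - 1 \<longrightarrow> even (card {B\<in>U. T \<subseteq> B})"
    using u unfolding unitrade_def by auto
  have fS: "finite S" using SV fV finite_subset by blast
  have fU: "finite U" using unitrade_finite_U[OF u] .
  have inj: "inj_on (\<lambda>B. S - B) U"
  proof (rule inj_onI)
    fix B B' assume h: "B \<in> U" "B' \<in> U" "S - B = S - B'"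
    have "B = S - (S - B)" "B' = S - (S - B')" using US h(1,2) by auto
    then show "B = B'" using h(3) by simp
  qed
  show "card F = card U" unfolding F_def using inj by (simp add: card_image)
  show "\<forall>t\<in>F. t \<subseteq> S \<and> card t = card S - k"
  proof
    fix t assume "t \<in> F"
    then obtain B where B: "B \<in> U" "t = S - B" unfolding F_def by auto
    have "finite B" using B US fS finite_subset by blast
    then show "t \<subseteq> S \<and> card t = card S - k" using B US bl by (simp add: card_Diff_subset)
  qed
  show "\<forall>Q. Q \<subseteq> S \<and> card Q = card S - k + 1 \<longrightarrow> even (card {t\<in>F. t \<subseteq> Q})"
  proof (intro allI impI)
    fix Q assume Q: "Q \<subseteq> S \<and> card Q = card S - k + 1"
    have fQ: "finite Q" using Q fS finite_subset by blast
    have cT: "card (S - Q) = k - 1" using Q fQ kS k by (simp add: card_Diff_subset)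
    have TV: "S - Q \<subseteq> V" using SV by auto
    have e: "even (card {B\<in>U. S - Q \<subseteq> B})" using ev cT TV by blast
    have "{t\<in>F. t \<subseteq> Q} = (\<lambda>B. S - B) ` {B\<in>U. S - Q \<subseteq> B}" unfolding F_def by auto
    moreover have "inj_on (\<lambda>B. S - B) {B\<in>U. S - Q \<subseteq> B}" using inj inj_on_subset by fastforce
    ultimately have "card {t\<in>F. t \<subseteq> Q} = card {B\<in>U. S - Q \<subseteq> B}" by (simp add: card_image)
    then show "even (card {t\<in>F. t \<subseteq> Q})" using e by simp
  qed
  show "\<forall>y\<in>S. card {t\<in>F. y \<in> t} + card {B\<in>U. y \<in> B} = card U"
  proof
    fix y assume y: "y \<in> S"
    have "{t\<in>F. y \<in> t} = (\<lambda>B. S - B) ` {B\<in>U. y \<notin> B}" unfolding F_def using y by auto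
    moreover have "inj_on (\<lambda>B. S - B) {B\<in>U. y \<notin> B}" using inj inj_on_subset by fastforce
    ultimately have c1: "card {t\<in>F. y \<in> t} = card {B\<in>U. y \<notin> B}" by (simp add: card_image)
    have "U = {B\<in>U. y \<notin> B} \<union> {B\<in>U. y \<in> B}" by auto
    moreover have "{B\<in>U. y \<notin> B} \<inter> {B\<in>U. y \<in> B} = {}" by auto
    ultimately have "card U = card {B\<in>U. y \<notin> B} + card {B\<in>U. y \<in> B}"
      using fU card_Un_disjoint[of "{B\<in>U. y \<notin> B}" "{B\<in>U. y \<in> B}"] by simp
    then show "card {t\<in>F. y \<in> t} + card {B\<in>U. y \<in> B} = card U" using c1 by simp
  qed
qed

lemma tg_pairdeg:
  assumes tg: "tg W F" and x: "x \<in> W" and u: "u \<in> W" "u \<noteq> x"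
  shows "card {t\<in>F. x\<in>t \<and> u\<in>t} = card (nb W F x u)"
proof -
  have "{t\<in>F. x\<in>t \<and> u\<in>t} = (\<lambda>w. {x,u,w}) ` nb W F x u"
  proof
    show "{t\<in>F. x\<in>t \<and> u\<in>t} \<subseteq> (\<lambda>w. {x,u,w}) ` nb W F x u"
    proof
      fix t assume t: "t \<in> {t\<in>F. x\<in>t \<and> u\<in>t}"
      obtain a b where ab: "t = {x,a,b}" "distinct [x,a,b]" "a \<in> W" "b \<in> W"
        using pair_of_tri[OF tg, of t x] t by auto
      show "t \<in> (\<lambda>w. {x,u,w}) ` nb W F x u"
      proof (cases "u = a")
        case True
        then have "b \<in> nb W F x u" using t ab unfolding nb_def by auto
        then show ?thesis using ab True by auto
      next
        case False
        then have ub: "u = b" using t ab u(2) by auto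
        then have "{x,u,a} = t" using ab by auto
        then have "a \<in> nb W F x u" using t ab unfolding nb_def by auto
        then show ?thesis using \<open>{x,u,a} = t\<close> by force
      qed
    qed
    show "(\<lambda>w. {x,u,w}) ` nb W F x u \<subseteq> {t\<in>F. x\<in>t \<and> u\<in>t}" unfolding nb_def by auto
  qed
  moreover have "inj_on (\<lambda>w. {x,u,w}) (nb W F x u)"
  proof (rule inj_onI)
    fix w w' assume h: "w \<in> nb W F x u" "w' \<in> nb W F x u" "{x,u,w} = {x,u,w'}"
    have "{x,u,w} \<in> F" using h(1) unfolding nb_def by simp
    then have "w \<noteq> x" "w \<noteq> u" using tg_tri[OF tg, of x u w] by auto
    moreover have "w \<in> {x,u,w'}" using h(3) by blast
    ultimately show "w = w'" by blast
  qed
  ultimately show ?thesis by (simp add: card_image)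
qed

lemma nb_sub:
  assumes tg: "tg W F" shows "nb W F x u \<subseteq> W - {x,u}"
proof
  fix w assume "w \<in> nb W F x u"
  then have "{x,u,w} \<in> F" "w \<in> W" unfolding nb_def by auto
  then show "w \<in> W - {x,u}" using tg_tri[OF tg, of x u w] by auto
qed

lemma tg_deg_split:
  assumes tg: "tg W F" and x: "x \<in> W" and u: "u \<in> W" "u \<noteq> x"
  shows "card {t\<in>F. x\<in>t} = card (nb W F x u) + card {t\<in>F. x\<in>t \<and> u\<notin>t}"
proof -
  have fF: "finite F" using tg_finF[OF tg] .
  have "{t\<in>F. x\<in>t} = {t\<in>F. x\<in>t \<and> u\<in>t} \<union> {t\<in>F. x\<in>t \<and> u\<notin>t}" by auto
  moreover have "{t\<in>F. x\<in>t \<and> u\<in>t} \<inter> {t\<in>F. x\<in>t \<and> u\<notin>t} = {}" by auto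
  ultimately have "card {t\<in>F. x\<in>t} = card {t\<in>F. x\<in>t \<and> u\<in>t} + card {t\<in>F. x\<in>t \<and> u\<notin>t}"
    using fF card_Un_disjoint[of "{t\<in>F. x\<in>t \<and> u\<in>t}" "{t\<in>F. x\<in>t \<and> u\<notin>t}"] by simp
  then show ?thesis using tg_pairdeg[OF tg x u] by simp
qed

lemma card_R:
  assumes tg: "tg W F" and x: "x \<in> W" and u: "u \<in> W" "u \<noteq> x"
  shows "card (W - {x,u} - nb W F x u) = card W - 2 - card (nb W F x u)"
proof -
  have fW: "finite W" using tg unfolding tg_def by auto
  have s: "nb W F x u \<subseteq> W - {x,u}" using nb_sub[OF tg] .
  have "card (W - {x,u}) = card W - 2" using x u fW by (simp add: card_Diff_subset)
  then show ?thesis using s fW by (simp add: card_Diff_subset finite_subset)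
qed

lemma blocks_le_choose:
  assumes "\<forall>B\<in>U. B \<subseteq> S \<and> card B = k" "finite S"
  shows "card U \<le> card S choose k"
proof -
  have "U \<subseteq> {B. B \<subseteq> S \<and> card B = k}" using assms by auto
  moreover have "finite {B. B \<subseteq> S \<and> card B = k}" using assms(2) by simp
  ultimately have "card U \<le> card {B. B \<subseteq> S \<and> card B = k}" by (rule card_mono[rotated])
  then show ?thesis using n_subsets[OF assms(2)] by simp
qed


lemma deg_link:
  assumes u: "unitrade k V U" and k: "k \<ge> 2" and y: "y \<in> B" "B \<in> U"
  shows "card {B\<in>U. y\<in>B} \<ge> k"
proof -
  obtain j where kj: "k = Suc j" using k by (cases k) auto
  have j: "j \<ge> 1" using k kj by simp
  have yV: "y \<in> V" using u y unfolding unitrade_def by auto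
  have lu: "unitrade j (V - {y}) (link y U)" using link_unitrade[of j V U y] u kj j yV by simp
  have "link y U \<noteq> {}" using y unfolding link_def by auto
  then have "card (link y U) \<ge> j + 1" using unitrade_lb[OF lu j] by simp
  then show ?thesis using card_link[of y U] kj by simp
qed

lemma link_size:
  assumes u: "unitrade (Suc k) V U" and k: "k \<ge> 1" and y: "y \<in> B" "B \<in> U"
  shows "unitrade k (V - {y}) (link y U) \<and> link y U \<noteq> {} \<and> card (link y U) = card {B\<in>U. y\<in>B}"
proof -
  have yV: "y \<in> V" using u y unfolding unitrade_def by auto
  have "link y U \<noteq> {}" using y unfolding link_def by auto
  then show ?thesis using link_unitrade[OF u k yV] card_link[of y U] by simp
qed

lemma sum_all_eq:
  fixes f :: "'a \<Rightarrow> nat"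
  assumes "finite S" "\<forall>y\<in>S. f y \<ge> c" "(\<Sum>y\<in>S. f y) = c * card S"
  shows "\<forall>y\<in>S. f y = c"
proof -
  have "(\<Sum>y\<in>S. f y) = (\<Sum>y\<in>S. c + (f y - c))" using assms(2) by (intro sum.cong) auto
  also have "\<dots> = c * card S + (\<Sum>y\<in>S. f y - c)" by (simp add: sum.distrib mult.commute)
  finally have "(\<Sum>y\<in>S. f y - c) = 0" using assms(3) by simp
  then have "\<forall>y\<in>S. f y - c = 0" using assms(1) by simp
  then show ?thesis using assms(2) by (auto intro: antisym)
qed

lemma support_facts:
  assumes u: "unitrade k V U"
  shows "finite (\<Union>U) \<and> \<Union>U \<subseteq> V \<and> (\<forall>B\<in>U. B \<subseteq> \<Union>U \<and> card B = k)
         \<and> (\<Sum>y\<in>\<Union>U. card {B\<in>U. y\<in>B}) = k * card U"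
proof -
  have fV: "finite V" and bl: "\<forall>B\<in>U. B \<subseteq> V \<and> card B = k" using u unfolding unitrade_def by auto
  have fU: "finite U" using unitrade_finite_U[OF u] .
  have SV: "\<Union>U \<subseteq> V" using bl by auto
  have fS: "finite (\<Union>U)" using SV fV finite_subset by blast
  have cB: "\<forall>B\<in>U. card {y\<in>\<Union>U. y \<in> B} = k"
  proof
    fix B assume "B \<in> U"
    then have "{y\<in>\<Union>U. y \<in> B} = B" by auto
    then show "card {y\<in>\<Union>U. y \<in> B} = k" using bl \<open>B \<in> U\<close> by simp
  qed
  have "(\<Sum>y\<in>\<Union>U. card {B\<in>U. y \<in> B}) = k * card U" by (rule sum_multicount[OF fS fU cB])
  then show ?thesis using fS SV bl by auto
qed

lemma tg_of_compl:
  assumes u: "unitrade k V U" and k: "k \<ge> 1" and S: "S = \<Union>U" and cS: "card S = k + 3"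
  shows "tg S ((\<lambda>B. S - B) ` U)"
proof -
  have sf: "finite S \<and> S \<subseteq> V \<and> (\<forall>B\<in>U. B \<subseteq> S \<and> card B = k)" using support_facts[OF u] S by auto
  note c = compl[OF u k, of S]
  have "\<forall>t\<in>(\<lambda>B. S - B) ` U. t \<subseteq> S \<and> card t = 3" using c sf cS by auto
  moreover have "\<forall>Q. Q \<subseteq> S \<and> card Q = 4 \<longrightarrow> even (card {t\<in>(\<lambda>B. S - B) ` U. t \<subseteq> Q})"
    using c sf cS by auto
  ultimately show ?thesis unfolding tg_def using sf by auto
qed

lemma spec4:
  assumes u: "unitrade 4 V U" and ne: "U \<noteq> {}"
  shows "card U \<noteq> 6 \<and> card U \<noteq> 7"
proof (rule ccontr)
  assume "\<not> (card U \<noteq> 6 \<and> card U \<noteq> 7)"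
  then have c67: "card U = 6 \<or> card U = 7" by simp
  define S where "S = \<Union>U"
  have sf: "finite S" "S \<subseteq> V" "\<forall>B\<in>U. B \<subseteq> S \<and> card B = 4"
    "(\<Sum>y\<in>S. card {B\<in>U. y\<in>B}) = 4 * card U"
    using support_facts[OF u] unfolding S_def by auto
  have deg: "\<forall>y\<in>S. card {B\<in>U. y\<in>B} \<ge> 4" using deg_link[OF u] unfolding S_def by auto
  have "(\<Sum>y\<in>S. 4) \<le> (\<Sum>y\<in>S. card {B\<in>U. y\<in>B})" by (rule sum_mono) (use deg in auto)
  then have cSU: "card S \<le> card U" using sf(4) by simp
  then have cS7: "card S \<le> 7" using c67 by auto
  have "card S \<le> 5 \<or> card S = 6 \<or> card S = 7" using cS7 by auto
  moreover have False if "card S \<le> 5"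
  proof -
    have "card U \<le> card S choose 4" using blocks_le_choose[OF sf(3) sf(1)] .
    moreover have "card S choose 4 \<le> 5"
    proof -
      have "card S = 0 \<or> card S = 1 \<or> card S = 2 \<or> card S = 3 \<or> card S = 4 \<or> card S = 5"
        using that by presburger
      then show ?thesis by (auto simp: numeral_eq_Suc)
    qed
    ultimately show False using c67 by auto
  qed
  moreover have False if cS: "card S = 6"
  proof -
    note c = compl[OF u _ sf(2), of] 
    define G where "G = (\<lambda>B. S - B) ` U"
    have c1: "card G = card U" "\<forall>t\<in>G. t \<subseteq> S \<and> card t = 2"
      "\<forall>Q. Q \<subseteq> S \<and> card Q = 3 \<longrightarrow> even (card {t\<in>G. t \<subseteq> Q})"
      using compl[OF u _ sf(2)] sf(3) cS unfolding G_def by auto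
    obtain a where a: "a \<le> 6" "card G = a * (6 - a)" using cut_card[OF sf(1) c1(2) c1(3)] cS by auto
    have "a = 0 \<or> a = 1 \<or> a = 2 \<or> a = 3 \<or> a = 4 \<or> a = 5 \<or> a = 6" using a(1) by presburger
    then show False using a(2) c1(1) c67 by auto
  qed
  moreover have False if cS: "card S = 7"
  proof -
    have cU: "card U = 7" using cSU c67 cS by auto
    have d4: "\<forall>y\<in>S. card {B\<in>U. y\<in>B} = 4"
      by (rule sum_all_eq[OF sf(1) deg]) (use sf(4) cU cS in simp)
    define F where "F = (\<lambda>B. S - B) ` U"
    have tg: "tg S F" unfolding F_def by (rule tg_of_compl[OF u]) (use S_def cS in auto)
    have cF: "card F = 7" and dF: "\<forall>y\<in>S. card {t\<in>F. y\<in>t} = 3"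
      using compl[OF u _ sf(2)] sf(3) cS cU d4 unfolding F_def by auto
    obtain x where x: "x \<in> S" using cS by fastforce
    have ex: "card {t\<in>F. x\<in>t} = 3" using dF x by simp
    have small: "card (nb S F x u) \<le> 1" if u': "u \<in> S - {x}" for u
    proof -
      have uu: "u \<in> S" "u \<noteq> x" using u' by auto
      define d where "d = card (nb S F x u)"
      have "d * (1 + card (S - {x,u} - nb S F x u)) \<le> card {t\<in>F. u\<in>t} + card {t\<in>F. x\<in>t \<and> u\<notin>t}"
        unfolding d_def by (rule tg_deg[OF tg x uu])
      moreover have "card (S - {x,u} - nb S F x u) = 5 - d" using card_R[OF tg x uu] cS d_def by simp
      moreover have "card {t\<in>F. x\<in>t \<and> u\<notin>t} = 3 - d" "d \<le> 3"
        using tg_deg_split[OF tg x uu] ex d_def by auto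
      moreover have "card {t\<in>F. u\<in>t} = 3" using dF uu by simp
      ultimately have h: "d * (1 + (5 - d)) \<le> 3 + (3 - d)" "d \<le> 3" by simp_all
      have "d = 0 \<or> d = 1 \<or> d = 2 \<or> d = 3" using h(2) by presburger
      then have "d \<le> 1" using h(1) by auto
      then show ?thesis unfolding d_def .
    qed
    have "card {t\<in>F. x\<in>t} * (card S - 1 - 2*1) + card {t\<in>F. x\<in>t} \<le> card F"
      by (rule tg_count[OF tg x]) (use small in auto)
    then show False using ex cF cS by simp
  qed
  ultimately show False by blast
qed


theorem proposition15:
  fixes V :: "'a set" and U :: "'a set set"
  assumes "unitrade 5 V U" and "card U = 16"
  shows "\<exists>x\<in>V. card {B\<in>U. x \<in> B} = 5 \<or> card {B\<in>U. x \<in> B} = 8"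
proof (rule ccontr)
  assume neg: "\<not> (\<exists>x\<in>V. card {B\<in>U. x \<in> B} = 5 \<or> card {B\<in>U. x \<in> B} = 8)"
  note u = assms(1)
  have cU: "card U = 16" using assms(2) .
  define S where "S = \<Union>U"
  have sf: "finite S" "S \<subseteq> V" "\<forall>B\<in>U. B \<subseteq> S \<and> card B = 5"
    "(\<Sum>y\<in>S. card {B\<in>U. y\<in>B}) = 5 * card U"
    using support_facts[OF u] unfolding S_def by auto
  have deg9: "card {B\<in>U. y\<in>B} \<ge> 9" if y: "y \<in> S" for y
  proof -
    obtain B where B: "y \<in> B" "B \<in> U" using y unfolding S_def by auto
    have u': "unitrade (Suc 4) V U" using u by simp
    have L: "unitrade 4 (V - {y}) (link y U)" "link y U \<noteq> {}" "card (link y U) = card {B\<in>U. y\<in>B}"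
      using link_size[OF u' _ B] by auto
    have "card (link y U) \<ge> 5" using unitrade_lb[OF L(1) _ L(2)] by simp
    moreover have "card (link y U) \<noteq> 6 \<and> card (link y U) \<noteq> 7" using spec4[OF L(1) L(2)] .
    moreover have "card {B\<in>U. y\<in>B} \<noteq> 5 \<and> card {B\<in>U. y\<in>B} \<noteq> 8" using neg y sf(2) by auto
    ultimately show ?thesis using L(3) by auto
  qed
  have "(\<Sum>y\<in>S. 9) \<le> (\<Sum>y\<in>S. card {B\<in>U. y\<in>B})" by (rule sum_mono) (use deg9 in auto)
  then have cS8: "card S \<le> 8" using sf(4) cU by simp
  have "card S \<le> 6 \<or> card S = 7 \<or> card S = 8" using cS8 by auto
  moreover have False if "card S \<le> 6"
  proof -
    have "card U \<le> card S choose 5" using blocks_le_choose[OF sf(3) sf(1)] .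
    moreover have "card S choose 5 \<le> 6"
    proof -
      have "card S = 0 \<or> card S = 1 \<or> card S = 2 \<or> card S = 3 \<or> card S = 4 \<or> card S = 5 \<or> card S = 6"
        using that by presburger
      then show ?thesis by (auto simp: numeral_eq_Suc)
    qed
    ultimately show False using cU by auto
  qed
  moreover have False if cS: "card S = 7"
  proof -
    define G where "G = (\<lambda>B. S - B) ` U"
    have c1: "card G = card U" "\<forall>t\<in>G. t \<subseteq> S \<and> card t = 2"
      "\<forall>Q. Q \<subseteq> S \<and> card Q = 3 \<longrightarrow> even (card {t\<in>G. t \<subseteq> Q})"
      using compl[OF u _ sf(2)] sf(3) cS unfolding G_def by auto
    obtain a where a: "a \<le> 7" "card G = a * (7 - a)" using cut_card[OF sf(1) c1(2) c1(3)] cS by auto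
    have "a = 0 \<or> a = 1 \<or> a = 2 \<or> a = 3 \<or> a = 4 \<or> a = 5 \<or> a = 6 \<or> a = 7" using a(1) by presburger
    then show False using a(2) c1(1) cU by auto
  qed
  moreover have False if cS: "card S = 8"
  proof -
    define F where "F = (\<lambda>B. S - B) ` U"
    have tg: "tg S F" unfolding F_def by (rule tg_of_compl[OF u]) (use S_def cS in auto)
    have cF: "card F = 16" and dF: "\<forall>y\<in>S. card {t\<in>F. y\<in>t} + card {B\<in>U. y\<in>B} = 16"
      using compl[OF u _ sf(2)] sf(3) cS cU unfolding F_def by auto
    have dF7: "card {t\<in>F. y\<in>t} \<le> 7" if "y \<in> S" for y using dF deg9[OF that] that by fastforce
    have fF: "finite F" using tg_finF[OF tg] .
    have ct: "\<forall>t\<in>F. card {y\<in>S. y \<in> t} = 3"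
    proof
      fix t assume t: "t \<in> F"
      then have "t \<subseteq> S" "card t = 3" using tg unfolding tg_def by auto
      moreover have "{y\<in>S. y \<in> t} = t" using \<open>t \<subseteq> S\<close> by auto
      ultimately show "card {y\<in>S. y \<in> t} = 3" by simp
    qed
    have sF: "(\<Sum>y\<in>S. card {t\<in>F. y\<in>t}) = 3 * card F" by (rule sum_multicount[OF sf(1) fF ct])
    obtain x where x: "x \<in> S" "card {t\<in>F. x\<in>t} \<ge> 6"
    proof (rule ccontr)
      assume "\<not> thesis"
      then have "\<forall>y\<in>S. card {t\<in>F. y\<in>t} \<le> 5" using that by force
      then have "(\<Sum>y\<in>S. card {t\<in>F. y\<in>t}) \<le> (\<Sum>y\<in>S. 5)" by (intro sum_mono) auto
      then show False using sF cF cS by simp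
    qed
    define e where "e = card {t\<in>F. x\<in>t}"
    have e67: "6 \<le> e" "e \<le> 7" using x dF7 unfolding e_def by auto
    have dsmall: "card (nb S F x u) \<le> 2 \<or> card (nb S F x u) = 6" if u': "u \<in> S - {x}" for u
    proof -
      have uu: "u \<in> S" "u \<noteq> x" using u' by auto
      define d where "d = card (nb S F x u)"
      have "d * (1 + card (S - {x,u} - nb S F x u)) \<le> card {t\<in>F. u\<in>t} + card {t\<in>F. x\<in>t \<and> u\<notin>t}"
        unfolding d_def by (rule tg_deg[OF tg x(1) uu])
      moreover have "card (S - {x,u} - nb S F x u) = 6 - d" using card_R[OF tg x(1) uu] cS d_def by simp
      moreover have "card {t\<in>F. x\<in>t \<and> u\<notin>t} = e - d" "d \<le> e"
        using tg_deg_split[OF tg x(1) uu] e_def d_def by auto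
      moreover have "card {t\<in>F. u\<in>t} \<le> 7" using dF7 uu by simp
      moreover have "d \<le> 6"
      proof -
        have "nb S F x u \<subseteq> S - {x,u}" using nb_sub[OF tg] .
        moreover have "card (S - {x,u}) = 6" using cS uu x sf(1) by (simp add: card_Diff_subset)
        ultimately show ?thesis unfolding d_def using sf(1) by (metis card_mono finite_Diff)
      qed
      ultimately have h: "d * (1 + (6 - d)) \<le> 7 + (e - d)" "d \<le> 6" "e \<le> 7" using e67 by simp_all
      have "d = 0 \<or> d = 1 \<or> d = 2 \<or> d = 3 \<or> d = 4 \<or> d = 5 \<or> d = 6" using h(2) by presburger
      then show ?thesis using h(1) h(3) unfolding d_def[symmetric] by auto
    qed
    show False
    proof (cases "\<exists>u\<in>S - {x}. card (nb S F x u) = 6")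
      case True
      then obtain u where u': "u \<in> S - {x}" "card (nb S F x u) = 6" by auto
      have uu: "u \<in> S" "u \<noteq> x" using u' by auto
      have full: "nb S F x u = S - {x,u}"
      proof -
        have "nb S F x u \<subseteq> S - {x,u}" using nb_sub[OF tg] .
        moreover have "card (S - {x,u}) = 6" using cS uu x sf(1) by (simp add: card_Diff_subset)
        ultimately show ?thesis using u'(2) sf(1) by (metis card_subset_eq finite_Diff)
      qed
      have "card F \<le> card {t\<in>F. x\<in>t} + card {t\<in>F. x\<in>t \<and> u\<notin>t} * (card S - 3)"
        by (rule tg_star[OF tg x(1) uu full])
      moreover have "card {t\<in>F. x\<in>t \<and> u\<notin>t} = e - 6"
        using tg_deg_split[OF tg x(1) uu] e_def u'(2) by auto
      ultimately have "16 \<le> e + (e - 6) * 5" using cF cS e_def by simp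
      then show False using e67 by auto
    next
      case False
      then have "\<forall>u\<in>S - {x}. card (nb S F x u) \<le> 2" using dsmall by blast
      then have "card {t\<in>F. x\<in>t} * (card S - 1 - 2*2) + card {t\<in>F. x\<in>t} \<le> card F"
        by (intro tg_count[OF tg x(1)]) auto
      then have "e * 3 + e \<le> 16" using cS cF e_def by simp
      then show False using e67 by auto
    qed
  qed
  ultimately show False by blast
qed


end
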